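(* Let $\gamma\in\mathbb{C}$ with $\Re\gamma>0$, $\Im\gamma<0$, and let $\nu,M$ be real numbers with $0<\nu<1/2$ and $M>0$. Let \[ Z:=\{z:-1+\nu\le\Re z\le2-\nu,\ |\Im z|\le M\}\setminus(\square^-_\nu\cup\square^+_\nu), \] where $\square^-_\nu:=\{z:-1+\nu\le\Re z\le\nu,\ |\Im z|\le\nu\}$ and $\square^+_\nu:=\{z:1-\nu\le\Re z\le2-\nu,\ |\Im z|\le\nu\}$. Then there is a constant $c>0$ independent of $z$ such that for all sufficiently large $N$ and all $z\in Z$, \[ \left|\frac{N}{2\pi i\gamma}\mathcal{L}_2\left(z-\frac{\gamma}{2N}\right)-\frac{N}{2\pi i\gamma}\mathcal{L}_2\left(z+\frac{\gamma}{2N}\right)-\mathcal{L}_1(z)\right|<\frac{c}{N^2}. \]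
   Context: On $\mathbb{C}\setminus((-\infty,0]\cup[1,\infty))$: $\mathcal{L}_1(z):=\log(1-e^{2\pi iz})$ if $\Im z\ge0$, $\mathcal{L}_1(z):=\pi i(2z-1)+\log(1-e^{-2\pi iz})$ if $\Im z<0$; $\mathcal{L}_2(z):=\mathrm{Li}_2(e^{2\pi iz})$ if $\Im z\ge0$, $\mathcal{L}_2(z):=\pi^2(2z^2-2z+\frac13)-\mathrm{Li}_2(e^{-2\pi iz})$ if $\Im z<0$. $\log$ has cut $(-\infty,0]$; $\mathrm{Li}_2(z)=-\int_0^z\frac{\log(1-x)}{x}dx$ has cut $[1,\infty)$. *)

theory Defs
  imports "HOL-Complex_Analysis.Complex_Analysis"
begin

text \<open>Dilogarithm Li_2(z) = - integral_0^z log(1-x)/x dx, taken along the straight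
segment from 0 to z (principal branch, cut [1,\<infinity>)). The integrand has a removable
singularity at 0 with value -1 there.\<close>

definition dilog_integrand :: "complex \<Rightarrow> complex" where
  "dilog_integrand x = (if x = 0 then -1 else Ln (1 - x) / x)"

definition Li2 :: "complex \<Rightarrow> complex" where
  "Li2 z = - contour_integral (linepath 0 z) dilog_integrand"

definition calL1 :: "complex \<Rightarrow> complex" where
  "calL1 (z::complex) = (if Im z \<ge> 0 then Ln (1 - exp (2 * pi * \<i> * z))
              else pi * \<i> * (2 * z - 1) + Ln (1 - exp (- 2 * pi * \<i> * z)))"

definition calL2 :: "complex \<Rightarrow> complex" where
  "calL2 (z::complex) = (if Im z \<ge> 0 then Li2 (exp (2 * pi * \<i> * z))
              else (of_real pi)\<^sup>2 * (2 * z\<^sup>2 - 2 * z + 1/3) - Li2 (exp (- 2 * pi * \<i> * z)))"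

definition box_minus :: "real \<Rightarrow> complex set" where
  "box_minus \<nu> = {z. -1 + \<nu> \<le> Re z \<and> Re z \<le> \<nu> \<and> \<bar>Im z\<bar> \<le> \<nu>}"

definition box_plus :: "real \<Rightarrow> complex set" where
  "box_plus \<nu> = {z. 1 - \<nu> \<le> Re z \<and> Re z \<le> 2 - \<nu> \<and> \<bar>Im z\<bar> \<le> \<nu>}"

definition regionZ :: "real \<Rightarrow> real \<Rightarrow> complex set" where
  "regionZ \<nu> M = {z. -1 + \<nu> \<le> Re z \<and> Re z \<le> 2 - \<nu> \<and> \<bar>Im z\<bar> \<le> M}
                   - (box_minus \<nu> \<union> box_plus \<nu>)"

end

theory Submission
  imports Defs
begin

definition slit :: "complex set" where "slit = {w. Im w \<noteq> 0 \<or> Re w < 1}"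

lemma open_slit: "open slit"
proof -
  have "slit = {w. Im w < 0} \<union> {w. Im w > 0} \<union> {w. Re w < 1}"
    unfolding slit_def by auto
  then show ?thesis
    by (metis open_Un open_halfspace_Im_lt open_halfspace_Im_gt open_halfspace_Re_lt)
qed

lemma slit_nonpos: "w \<in> slit \<Longrightarrow> 1 - w \<notin> \<real>\<^sub>\<le>\<^sub>0"
  unfolding slit_def by (auto simp: complex_nonpos_Reals_iff)

lemma segment_slit: "w \<in> slit \<Longrightarrow> closed_segment 0 w \<subseteq> slit"
proof
  fix u assume w: "w \<in> slit" and u: "u \<in> closed_segment 0 w"
  then obtain t where t: "0 \<le> t" "t \<le> 1" "u = t *\<^sub>R w"
    by (auto simp: closed_segment_def)
  show "u \<in> slit"
  proof (cases "Im w = 0")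
    case True
    with w have "Re w < 1" by (auto simp: slit_def)
    have "t * Re w < 1"
    proof (cases "Re w \<le> 0")
      case True
      have "t * Re w \<le> 0" using True t by (simp add: mult_nonneg_nonpos)
      then show ?thesis by linarith
    next
      case False
      have "t * Re w \<le> 1 * Re w" using False t by (intro mult_right_mono) auto
      then show ?thesis using \<open>Re w < 1\<close> by linarith
    qed
    then show ?thesis using t by (simp add: slit_def)
  next
    case False
    show ?thesis
    proof (cases "t = 0")
      case True then show ?thesis using t by (simp add: slit_def)
    next
      case False then show ?thesis using t \<open>Im w \<noteq> 0\<close> by (simp add: slit_def)
    qed
  qed
qed

lemma starlike_slit: "starlike slit"
  unfolding starlike_def using segment_slit by (intro bexI[of _ 0]) (auto simp: slit_def)

lemma dilog_cont0: "isCont dilog_integrand 0"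
proof -
  have "((\<lambda>w. Ln (1 - w)) has_field_derivative -1) (at 0)"
    by (auto intro!: derivative_eq_intros)
  then have "((\<lambda>y. (Ln (1 - y) - Ln (1 - 0)) / (y - 0)) \<longlongrightarrow> -1) (at 0)"
    unfolding DERIV_def by simp
  then have "((\<lambda>y. Ln (1 - y) / y) \<longlongrightarrow> -1) (at 0)" by simp
  then have "(dilog_integrand \<longlongrightarrow> -1) (at 0)"
    by (rule Lim_transform_eventually) (auto simp: dilog_integrand_def eventually_at_filter)
  then show ?thesis by (simp add: isCont_def dilog_integrand_def)
qed

lemma dilog_diff: "w \<in> slit \<Longrightarrow> w \<noteq> 0 \<Longrightarrow> dilog_integrand field_differentiable at w"
proof -
  assume w: "w \<in> slit" "w \<noteq> 0"
  have "((\<lambda>w. Ln (1 - w) / w) has_field_derivative (-1/(1-w)/w - Ln (1-w)/w^2)) (at w)"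
    using w slit_nonpos[OF w(1)]
    by (auto intro!: derivative_eq_intros simp: power2_eq_square divide_simps)
  then have "(dilog_integrand has_field_derivative (-1/(1-w)/w - Ln (1-w)/w^2)) (at w)"
    by (rule has_field_derivative_transform_within_open[where S="-{0}"])
       (use w in \<open>auto simp: dilog_integrand_def\<close>)
  then show ?thesis using field_differentiable_def by blast
qed

lemma dilog_cont: "continuous_on slit dilog_integrand"
proof -
  have "isCont dilog_integrand w" if "w \<in> slit" for w
  proof (cases "w = 0")
    case True then show ?thesis using dilog_cont0 by simp
  next
    case False then show ?thesis
      using dilog_diff[OF that] field_differentiable_imp_continuous_at by blast
  qed
  then show ?thesis by (simp add: continuous_at_imp_continuous_on)
qed

lemma Li2_deriv:
  assumes x: "x \<in> slit"
  shows "(Li2 has_field_derivative - dilog_integrand x) (at x)"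
proof -
  let ?f = dilog_integrand
  let ?S = slit
  have a: "0 \<in> ?S" by (simp add: slit_def)
  { fix b c
    assume "closed_segment b c \<subseteq> ?S"
    then have abcs: "convex hull {0, b, c} \<subseteq> ?S"
      by (simp add: a segment_slit starlike_convex_subset)
    then have "continuous_on (convex hull {0, b, c}) ?f"
      by (simp add: continuous_on_subset [OF dilog_cont])
    then have "(?f has_contour_integral 0) (linepath 0 b +++ linepath b c +++ linepath c 0)"
    proof (rule Cauchy_theorem_triangle_cofinite[where S="{0}"])
      fix y assume "y \<in> interior (convex hull {0, b, c}) - {0}"
      then have "y \<in> slit" "y \<noteq> 0" using abcs interior_subset by blast+
      then show "?f field_differentiable at y" by (rule dilog_diff)
    qed simp
    then have "contour_integral (linepath 0 b) ?f + contour_integral (linepath b c) ?f +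
                       contour_integral (linepath c 0) ?f = 0"
      by (rule has_chain_integral_chain_integral3)
  } note 0 = this
  have "((\<lambda>x. contour_integral (linepath 0 x) ?f) has_field_derivative ?f x) (at x)"
    by (rule triangle_contour_integrals_starlike_primitive[OF dilog_cont a open_slit x segment_slit 0])
  then have "((\<lambda>x. - contour_integral (linepath 0 x) ?f) has_field_derivative - ?f x) (at x)"
    by (rule DERIV_minus)
  then show ?thesis by (simp add: Li2_def[abs_def])
qed

definition rsq :: "nat \<Rightarrow> real" where "rsq n = 1 / (real n)^2"
definition csq :: "nat \<Rightarrow> complex" where "csq n = 1 / (of_nat n)^2"
definition Sser :: "complex \<Rightarrow> complex" where "Sser x = (\<Sum>n. csq n * x^n)"

lemma rsq_sums: "rsq sums (pi^2/6)"
proof -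
  have i: "(\<lambda>n. 1/(1+real n)^2) sums (pi^2/6)"
    using inverse_squares_sums by simp
  have e: "(\<lambda>n. rsq (Suc n)) = (\<lambda>n. 1/(1+real n)^2)"
    by (simp add: rsq_def)
  have "(\<lambda>n. rsq (Suc n)) sums (pi^2/6)"
    by (simp only: e i)
  then have "rsq sums (pi^2/6 + rsq 0)" by (simp only: sums_Suc_iff)
  then show ?thesis by (simp add: rsq_def)
qed

lemma rsq_summable: "summable rsq" using rsq_sums sums_summable by blast

lemma csq_norm: "norm (csq n) = rsq n"
  by (simp add: csq_def rsq_def norm_divide norm_power)

lemma alt_sum: "(\<lambda>n. (-1)^n * rsq n) sums (- (pi^2/12))"
proof -
  define e where "e n = (if even n then rsq n else 0)" for n
  have "(\<lambda>m. rsq m / 4) sums (pi^2/6/4)" by (rule sums_divide[OF rsq_sums])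
  moreover have "(\<lambda>m. e (2*m)) = (\<lambda>m. rsq m / 4)"
    by (auto simp: e_def rsq_def power2_eq_square)
  ultimately have "(\<lambda>m. e (2*m)) sums (pi^2/24)" by simp
  then have "e sums (pi^2/24)"
  proof (subst sums_mono_reindex[symmetric, where g="\<lambda>m. 2*m"])
    show "strict_mono (\<lambda>m::nat. 2*m)" by (auto simp: strict_mono_def)
    show "e n = 0" if "n \<notin> range (\<lambda>m::nat. 2*m)" for n
      using that by (auto simp: e_def elim!: evenE)
  qed
  then have "(\<lambda>n. 2 * e n - rsq n) sums (2 * (pi^2/24) - pi^2/6)"
    by (intro sums_diff sums_mult rsq_sums)
  moreover have "(\<lambda>n. 2 * e n - rsq n) = (\<lambda>n. (-1)^n * rsq n)"
    by (auto simp: e_def)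
  ultimately show ?thesis by simp
qed

lemma Sser_deriv:
  assumes "norm x < 1"
  shows "(Sser has_field_derivative (\<Sum>n. x^n / of_nat (Suc n))) (at x)"
proof -
  have sm: "summable (\<lambda>n. csq n * 1 ^ n)"
    using rsq_summable csq_norm summable_norm_cancel by (simp add: summable_norm_cancel[of csq])
  have "DERIV (\<lambda>x. \<Sum>n. csq n * x^n) x :> (\<Sum>n. diffs csq n * x^n)"
    by (rule termdiffs_strong[OF sm]) (use assms in simp)
  moreover have "diffs csq n * x^n = x^n / of_nat (Suc n)" for n
    by (simp add: diffs_def csq_def power2_eq_square field_simps del: of_nat_Suc)
  ultimately show ?thesis by (simp add: Sser_def[abs_def])
qed

lemma log_series:
  assumes "norm x < 1" "x \<noteq> 0"
  shows "(\<lambda>n. x^n / of_nat (Suc n)) sums (- Ln (1 - x) / x)"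
proof -
  have "(\<lambda>n. - ((- (-x))^n) / of_nat n) sums ln (1 + (-x))"
    by (rule Ln_series') (use assms in simp)
  then have "(\<lambda>n. - (x^n) / of_nat n) sums Ln (1 - x)" by simp
  then have "(\<lambda>n. - (x^(Suc n)) / of_nat (Suc n)) sums Ln (1 - x)"
    by (subst sums_Suc_iff) simp
  then have "(\<lambda>n. (- (x^(Suc n)) / of_nat (Suc n)) / (-x)) sums (Ln (1 - x) / (-x))"
    by (rule sums_divide)
  moreover have "(\<lambda>n. (- (x^(Suc n)) / of_nat (Suc n)) / (-x)) = (\<lambda>n. x^n / of_nat (Suc n))"
    using assms by (simp add: divide_simps del: of_nat_Suc)
  ultimately show ?thesis by simp
qed

lemma ball_slit: "norm x < 1 \<Longrightarrow> x \<in> slit"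
  using complex_Re_le_cmod[of x] by (auto simp: slit_def)

lemma Li2_0: "Li2 0 = 0" unfolding Li2_def by simp

lemma Li2_eq_Sser: "norm x < 1 \<Longrightarrow> Li2 x = Sser x"
proof -
  have "\<exists>c. \<forall>x\<in>ball 0 1. Li2 x - Sser x = c"
  proof (rule has_field_derivative_zero_constant)
    fix y :: complex assume y: "y \<in> ball 0 1"
    then have ny: "norm y < 1" by simp
    have d1: "(Li2 has_field_derivative - dilog_integrand y) (at y)"
      by (rule Li2_deriv[OF ball_slit[OF ny]])
    have d2: "(Sser has_field_derivative (\<Sum>n. y^n / of_nat (Suc n))) (at y)"
      by (rule Sser_deriv[OF ny])
    have eq: "- dilog_integrand y = (\<Sum>n. y^n / of_nat (Suc n))"
    proof (cases "y = 0")
      case True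
      have "(\<Sum>n. y^n / of_nat (Suc n)) = (\<Sum>n. (1 / of_nat (Suc n)) * y^n)"
        by (simp add: field_simps)
      also have "\<dots> = 1" using True powser_zero[of "\<lambda>n. 1 / (of_nat (Suc n) :: complex)"] by simp
      finally show ?thesis using True by (simp add: dilog_integrand_def)
    next
      case False
      have "(\<Sum>n. y^n / of_nat (Suc n)) = - Ln (1 - y) / y"
        using log_series[OF ny False] by (rule sums_unique[symmetric])
      then show ?thesis using False by (simp add: dilog_integrand_def)
    qed
    show "((\<lambda>x. Li2 x - Sser x) has_field_derivative 0) (at y within ball 0 1)"
      using DERIV_diff[OF d1 d2] eq by (simp add: has_field_derivative_at_within)
  qed simp
  then obtain c where c: "\<And>x. x \<in> ball 0 1 \<Longrightarrow> Li2 x - Sser x = c" by blast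
  have "Sser 0 = 0" unfolding Sser_def powser_zero by (simp add: csq_def)
  then have "c = 0" using c[of 0] by (simp add: Li2_0)
  then show "norm x < 1 \<Longrightarrow> Li2 x = Sser x" using c[of x] by simp
qed

lemma Sser_cont: "continuous_on (cball 0 1) Sser"
proof -
  have "uniform_limit (cball 0 1) (\<lambda>n x. \<Sum>i<n. csq i * x^i) (\<lambda>x. suminf (\<lambda>i. csq i * x^i)) sequentially"
  proof (rule Weierstrass_m_test[OF _ rsq_summable])
    fix n and x :: complex assume "x \<in> cball 0 1"
    then have "norm x \<le> 1" by simp
    then have "norm x ^ n \<le> 1" by (simp add: power_le_one)
    then show "norm (csq n * x^n) \<le> rsq n"
      by (simp add: norm_mult norm_power csq_norm rsq_def divide_simps)
  qed
  then show ?thesis unfolding Sser_def[abs_def]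
    by (rule uniform_limit_theorem[rotated]) (auto intro!: always_eventually continuous_intros)
qed

lemma Sser_m1: "Sser (-1) = - complex_of_real (pi^2 / 12)"
proof -
  have "(\<lambda>n. complex_of_real ((-1)^n * rsq n)) sums of_real (- (pi^2/12))"
    using alt_sum sums_of_real by blast
  moreover have "(\<lambda>n. complex_of_real ((-1)^n * rsq n)) = (\<lambda>n. csq n * (-1)^n)"
    by (auto simp: csq_def rsq_def)
  ultimately show ?thesis unfolding Sser_def using sums_unique by fastforce
qed

lemma Li2_m1: "Li2 (-1) = - complex_of_real (pi^2 / 12)"
proof -
  have m1: "-1 \<in> slit" by (simp add: slit_def)
  have "isCont Li2 (-1)"
    using Li2_deriv[OF m1] DERIV_isCont by blast
  then have l1: "(Li2 \<longlongrightarrow> Li2 (-1)) (at (-1) within ball 0 1)"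
    by (simp add: isCont_def tendsto_within_subset[OF _ subset_UNIV])
  have "(Sser \<longlongrightarrow> Sser (-1)) (at (-1) within cball 0 1)"
    using Sser_cont by (simp add: continuous_on_def)
  then have "(Sser \<longlongrightarrow> Sser (-1)) (at (-1) within ball 0 1)"
    by (rule tendsto_within_subset) auto
  then have l2: "(Li2 \<longlongrightarrow> Sser (-1)) (at (-1) within ball 0 1)"
    by (rule Lim_transform_within[where d=1]) (auto simp: Li2_eq_Sser dist_norm)
  have nt: "at (-1) within ball (0::complex) 1 \<noteq> bot"
    by (subst at_within_eq_bot_iff) (simp add: closure_ball)
  have "Li2 (-1) = Sser (-1)" using tendsto_unique[OF nt l1 l2] .
  then show ?thesis by (simp add: Sser_m1)
qed

lemma norm_exp2: "norm (exp (2 * pi * \<i> * z)) = exp (- 2 * pi * Im z)"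
  by (simp add: norm_exp)

lemma norm_expm2: "norm (exp (- 2 * pi * \<i> * z)) = exp (2 * pi * Im z)"
  by (simp add: norm_exp)

lemma exp_up_slit: "Im z > 0 \<Longrightarrow> exp (2 * pi * \<i> * z) \<in> slit"
  by (rule ball_slit) (simp add: norm_exp2)

lemma exp_down_slit: "Im z < 0 \<Longrightarrow> exp (- 2 * pi * \<i> * z) \<in> slit"
  by (rule ball_slit) (simp add: norm_expm2 mult_pos_neg)

lemma exp_strip_slit:
  assumes "0 < Re z" "Re z < 1"
  shows "exp (2 * pi * \<i> * z) \<in> slit"
proof (rule ccontr)
  let ?w = "exp (2 * pi * \<i> * z)"
  assume "?w \<notin> slit"
  then have im: "Im ?w = 0" and re: "Re ?w \<ge> 1" by (auto simp: slit_def)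
  have "Im ?w = exp (- 2 * pi * Im z) * sin (2 * pi * Re z)"
    by (simp add: Im_exp)
  with im have "sin (2 * pi * Re z) = 0" by simp
  then obtain i :: int where i: "2 * pi * Re z = of_int i * pi"
    by (auto simp: sin_zero_iff_int2)
  then have "of_int i = 2 * Re z" by (simp add: field_simps)
  with assms have "of_int i > (0::real)" "of_int i < (2::real)" by auto
  then have "i = 1" by linarith
  with i have "2 * pi * Re z = pi" by simp
  then have "cos (2 * pi * Re z) = -1" by (metis cos_pi)
  moreover have "Re ?w = exp (- 2 * pi * Im z) * cos (2 * pi * Re z)"
    by (simp add: Re_exp)
  ultimately have "Re ?w < 0" by simp
  with re show False by simp
qed

lemma exp_m_eq: "exp (- 2 * pi * \<i> * z) = exp (2 * pi * \<i> * (1 - z))"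
proof -
  have "exp (2 * pi * \<i> * (1 - z)) = exp (2 * pi * \<i> + (- 2 * pi * \<i> * z))"
    by (rule arg_cong[where f=exp]) (simp add: algebra_simps)
  also have "\<dots> = exp (2 * pi * \<i>) * exp (- 2 * pi * \<i> * z)"
    by (rule exp_add)
  also have "exp (2 * pi * \<i>) = (1::complex)"
    using exp_two_pi_i by simp
  finally show ?thesis by simp
qed

lemma expm_strip_slit:
  assumes "0 < Re z" "Re z < 1"
  shows "exp (- 2 * pi * \<i> * z) \<in> slit"
  unfolding exp_m_eq by (rule exp_strip_slit) (use assms in auto)

lemma G_deriv:
  assumes "exp (2 * pi * \<i> * z) \<in> slit"
  shows "((\<lambda>z. Li2 (exp (2 * pi * \<i> * z))) has_field_derivative
           (- 2 * pi * \<i> * Ln (1 - exp (2 * pi * \<i> * z)))) (at z)"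
proof -
  let ?w = "exp (2 * pi * \<i> * z)"
  have d: "((\<lambda>z. exp (2 * pi * \<i> * z)) has_field_derivative (2 * pi * \<i> * ?w)) (at z)"
    by (auto intro!: derivative_eq_intros)
  have "((\<lambda>z. Li2 (exp (2 * pi * \<i> * z))) has_field_derivative (- dilog_integrand ?w * (2 * pi * \<i> * ?w))) (at z)"
    by (rule DERIV_chain2[OF Li2_deriv[OF assms] d])
  moreover have "- dilog_integrand ?w * (2 * pi * \<i> * ?w) = - 2 * pi * \<i> * Ln (1 - ?w)"
    by (simp add: dilog_integrand_def)
  ultimately show ?thesis by (rule DERIV_cong)
qed

lemma Gm_deriv:
  assumes "exp (- 2 * pi * \<i> * z) \<in> slit"
  shows "((\<lambda>z. Li2 (exp (- 2 * pi * \<i> * z))) has_field_derivative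
           (2 * pi * \<i> * Ln (1 - exp (- 2 * pi * \<i> * z)))) (at z)"
proof -
  let ?w = "exp (- 2 * pi * \<i> * z)"
  have d: "((\<lambda>z. exp (- 2 * pi * \<i> * z)) has_field_derivative (- 2 * pi * \<i> * ?w)) (at z)"
    by (auto intro!: derivative_eq_intros)
  have "((\<lambda>z. Li2 (exp (- 2 * pi * \<i> * z))) has_field_derivative (- dilog_integrand ?w * (- 2 * pi * \<i> * ?w))) (at z)"
    by (rule DERIV_chain2[OF Li2_deriv[OF assms] d])
  moreover have "- dilog_integrand ?w * (- 2 * pi * \<i> * ?w) = 2 * pi * \<i> * Ln (1 - ?w)"
    by (simp add: dilog_integrand_def)
  ultimately show ?thesis by (rule DERIV_cong)
qed

definition strip :: "complex set" where "strip = {z. 0 < Re z \<and> Re z < 1}"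

lemma strip_conv: "convex strip" and strip_open: "open strip"
proof -
  have e: "strip = {z. Re z > 0} \<inter> {z. Re z < 1}" by (auto simp: strip_def)
  show "convex strip" unfolding e by (intro convex_Int convex_halfspace_Re_gt convex_halfspace_Re_lt)
  show "open strip" unfolding e by (intro open_Int open_halfspace_Re_gt open_halfspace_Re_lt)
qed

lemma log_identity:
  assumes z: "z \<in> strip"
  shows "Ln (1 - exp (2 * pi * \<i> * z)) - Ln (1 - exp (- 2 * pi * \<i> * z)) = \<i> * pi * (2 * z - 1)"
proof -
  define q where "q z = Ln (1 - exp (2 * pi * \<i> * z)) - Ln (1 - exp (- 2 * pi * \<i> * z)) - \<i> * pi * (2 * z - 1)" for z
  have s1: "exp (2 * pi * \<i> * x) \<in> slit" and s2: "exp (- 2 * pi * \<i> * x) \<in> slit" if "x \<in> strip" for x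
    using that exp_strip_slit expm_strip_slit by (auto simp: strip_def)
  have qint: "\<exists>n::int. q x = \<i> * of_real (2 * pi * of_int n)" if x: "x \<in> strip" for x
  proof -
    let ?w = "exp (2 * pi * \<i> * x)"
    have w0: "?w \<noteq> 0" by simp
    have w1: "?w \<noteq> 1" using s1[OF x] by (auto simp: slit_def)
    have wm: "exp (- 2 * pi * \<i> * x) = inverse ?w"
      by (simp add: exp_minus[symmetric])
    have wm1: "1 - inverse ?w \<noteq> 0" using w1 w0 by (auto simp: field_simps)
    have e3: "exp (\<i> * pi * (2 * x - 1)) = - ?w"
    proof -
      have "\<i> * pi * (2 * x - 1) = 2 * pi * \<i> * x - \<i> * pi" by (simp add: algebra_simps)
      then show ?thesis by (simp add: exp_diff)
    qed
    have "exp (q x) = (1 - ?w) / (1 - inverse ?w) / (- ?w)"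
      unfolding q_def exp_diff wm e3 using w1 wm1 by simp
    also have "\<dots> = 1" using w0 w1 by (simp add: field_simps)
    finally have "exp (q x) = 1" .
    then obtain n :: int where "Re (q x) = 0" "Im (q x) = of_int (2 * n) * pi"
      by (auto simp: exp_eq_1)
    then have "q x = \<i> * of_real (2 * pi * of_int n)"
      by (simp add: complex_eq_iff)
    then show ?thesis by blast
  qed
  have cont: "continuous_on strip q"
    unfolding q_def
    by (intro continuous_intros) (use s1 s2 slit_nonpos in auto)
  have "q constant_on strip"
  proof (rule continuous_discrete_range_constant[OF convex_connected[OF strip_conv] cont])
    fix x assume x: "x \<in> strip"
    show "\<exists>e>0. \<forall>y. y \<in> strip \<and> q y \<noteq> q x \<longrightarrow> e \<le> norm (q y - q x)"
    proof (intro exI[of _ "2 * pi"] conjI allI impI)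
      fix y assume y: "y \<in> strip \<and> q y \<noteq> q x"
      obtain n where n: "q x = \<i> * of_real (2 * pi * of_int n)" using qint[OF x] by blast
      obtain m where m: "q y = \<i> * of_real (2 * pi * of_int m)" using qint y by blast
      have "m \<noteq> n" using y n m by auto
      then have "1 \<le> \<bar>of_int m - of_int n :: real\<bar>" by linarith
      then have "2 * pi * 1 \<le> 2 * pi * \<bar>of_int m - of_int n :: real\<bar>"
        by (intro mult_left_mono) auto
      also have "\<dots> = norm (q y - q x)"
      proof -
        have "q y - q x = \<i> * of_real (2 * pi * (of_int m - of_int n))"
          unfolding n m by (simp add: algebra_simps)
        then show ?thesis by (simp add: norm_mult abs_mult flip: of_int_diff)
      qed
      finally show "2 * pi \<le> norm (q y - q x)" by simp
    qed simp
  qed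
  then obtain c where c: "\<And>x. x \<in> strip \<Longrightarrow> q x = c" by (auto simp: constant_on_def)
  have h: "(1/2 :: complex) \<in> strip" by (simp add: strip_def)
  have "exp (2 * pi * \<i> * (1/2 :: complex)) = -1" by (simp add: mult.commute)
  moreover have "exp (- 2 * pi * \<i> * (1/2 :: complex)) = -1"
    by (simp add: exp_minus mult.commute)
  ultimately have "q (1/2) = 0" by (simp add: q_def)
  then have "c = 0" using c[OF h] by simp
  then show ?thesis using c[OF z] by (simp add: q_def)
qed

lemma inversion:
  assumes z: "z \<in> strip"
  shows "Li2 (exp (2 * pi * \<i> * z)) + Li2 (exp (- 2 * pi * \<i> * z)) = (of_real pi)\<^sup>2 * (2 * z\<^sup>2 - 2 * z + 1/3)"
proof -
  define \<Phi> where "\<Phi> z = Li2 (exp (2 * pi * \<i> * z)) + Li2 (exp (- 2 * pi * \<i> * z)) - (of_real pi)\<^sup>2 * (2 * z\<^sup>2 - 2 * z + 1/3)" for z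
  have "\<exists>c. \<forall>x\<in>strip. \<Phi> x = c"
  proof (rule has_field_derivative_zero_constant[OF strip_conv])
    fix x assume x: "x \<in> strip"
    then have x01: "0 < Re x" "Re x < 1" by (auto simp: strip_def)
    have dP: "((\<lambda>z. (of_real pi)\<^sup>2 * (2 * z\<^sup>2 - 2 * z + 1/3)) has_field_derivative
               (of_real pi)\<^sup>2 * (4 * x - 2)) (at x)"
      by (auto intro!: derivative_eq_intros simp: algebra_simps)
    have d: "(\<Phi> has_field_derivative
        (- 2 * pi * \<i> * Ln (1 - exp (2 * pi * \<i> * x)) + 2 * pi * \<i> * Ln (1 - exp (- 2 * pi * \<i> * x))
          - (of_real pi)\<^sup>2 * (4 * x - 2))) (at x)"
      unfolding \<Phi>_def[abs_def]
      by (intro DERIV_diff DERIV_add G_deriv Gm_deriv dP exp_strip_slit expm_strip_slit x01)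
    have "- 2 * pi * \<i> * Ln (1 - exp (2 * pi * \<i> * x)) + 2 * pi * \<i> * Ln (1 - exp (- 2 * pi * \<i> * x))
          = - 2 * pi * \<i> * (Ln (1 - exp (2 * pi * \<i> * x)) - Ln (1 - exp (- 2 * pi * \<i> * x)))"
      by (simp add: algebra_simps)
    also have "\<dots> = - 2 * pi * \<i> * (\<i> * pi * (2 * x - 1))"
      by (simp only: log_identity[OF x])
    finally have "- 2 * pi * \<i> * Ln (1 - exp (2 * pi * \<i> * x)) + 2 * pi * \<i> * Ln (1 - exp (- 2 * pi * \<i> * x))
          - (of_real pi)\<^sup>2 * (4 * x - 2) = 0"
      by (simp add: algebra_simps power2_eq_square)
    with d show "(\<Phi> has_field_derivative 0) (at x within strip)"
      by (simp add: has_field_derivative_at_within)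
  qed
  then obtain c where c: "\<And>x. x \<in> strip \<Longrightarrow> \<Phi> x = c" by blast
  have h: "(1/2 :: complex) \<in> strip" by (simp add: strip_def)
  have e1: "exp (2 * pi * \<i> * (1/2 :: complex)) = -1" by (simp add: mult.commute)
  have e2: "exp (- 2 * pi * \<i> * (1/2 :: complex)) = -1"
    by (simp add: exp_minus mult.commute)
  have "\<Phi> (1/2) = 0"
    unfolding \<Phi>_def e1 e2 Li2_m1 by (simp add: power2_eq_square field_simps)
  then have "c = 0" using c[OF h] by simp
  then show ?thesis using c[OF z] by (simp add: \<Phi>_def)
qed

definition W :: "complex set" where "W = {z. Im z > 0} \<union> {z. Im z < 0} \<union> strip"

lemma open_W: "open W"
  unfolding W_def by (intro open_Un open_halfspace_Im_gt open_halfspace_Im_lt strip_open)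

lemma calL2_deriv:
  assumes z: "z \<in> W"
  shows "(calL2 has_field_derivative (- 2 * pi * \<i> * calL1 z)) (at z)"
proof -
  consider "Im z > 0" | "Im z < 0" | "Im z = 0" "z \<in> strip" using z by (auto simp: W_def) linarith
  then show ?thesis
  proof cases
    case 1
    have "((\<lambda>z. Li2 (exp (2 * pi * \<i> * z))) has_field_derivative
           (- 2 * pi * \<i> * Ln (1 - exp (2 * pi * \<i> * z)))) (at z)"
      by (rule G_deriv[OF exp_up_slit[OF 1]])
    then have "(calL2 has_field_derivative (- 2 * pi * \<i> * Ln (1 - exp (2 * pi * \<i> * z)))) (at z)"
      by (rule has_field_derivative_transform_within_open[where S="{z. Im z > 0}"])
         (use 1 in \<open>auto simp: open_halfspace_Im_gt calL2_def\<close>)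
    then show ?thesis using 1 by (simp add: calL1_def)
  next
    case 2
    have dP: "((\<lambda>z. (of_real pi)\<^sup>2 * (2 * z\<^sup>2 - 2 * z + 1/3)) has_field_derivative
               (of_real pi)\<^sup>2 * (4 * z - 2)) (at z)"
      by (auto intro!: derivative_eq_intros simp: algebra_simps)
    have "((\<lambda>z. (of_real pi)\<^sup>2 * (2 * z\<^sup>2 - 2 * z + 1/3) - Li2 (exp (- 2 * pi * \<i> * z))) has_field_derivative
           ((of_real pi)\<^sup>2 * (4 * z - 2) - 2 * pi * \<i> * Ln (1 - exp (- 2 * pi * \<i> * z)))) (at z)"
      by (intro DERIV_diff dP Gm_deriv exp_down_slit 2)
    then have "(calL2 has_field_derivative ((of_real pi)\<^sup>2 * (4 * z - 2) - 2 * pi * \<i> * Ln (1 - exp (- 2 * pi * \<i> * z)))) (at z)"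
      by (rule has_field_derivative_transform_within_open[where S="{z. Im z < 0}"])
         (use 2 in \<open>auto simp: open_halfspace_Im_lt calL2_def\<close>)
    moreover have "(of_real pi)\<^sup>2 * (4 * z - 2) - 2 * pi * \<i> * Ln (1 - exp (- 2 * pi * \<i> * z))
        = - 2 * pi * \<i> * calL1 z"
      using 2 by (simp add: calL1_def algebra_simps power2_eq_square)
    ultimately show ?thesis by (rule DERIV_cong)
  next
    case 3
    have s: "exp (2 * pi * \<i> * z) \<in> slit" using 3 exp_strip_slit by (auto simp: strip_def)
    have "((\<lambda>z. Li2 (exp (2 * pi * \<i> * z))) has_field_derivative
           (- 2 * pi * \<i> * Ln (1 - exp (2 * pi * \<i> * z)))) (at z)"
      by (rule G_deriv[OF s])
    then have "(calL2 has_field_derivative (- 2 * pi * \<i> * Ln (1 - exp (2 * pi * \<i> * z)))) (at z)"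
    proof (rule has_field_derivative_transform_within_open[where S="strip"])
      show "open strip" by (rule strip_open)
      show "z \<in> strip" by (rule 3)
      fix x assume x: "x \<in> strip"
      show "Li2 (exp (2 * pi * \<i> * x)) = calL2 x"
      proof (cases "Im x \<ge> 0")
        case True then show ?thesis by (simp add: calL2_def)
      next
        case False then show ?thesis using inversion[OF x] by (simp add: calL2_def algebra_simps)
      qed
    qed
    then show ?thesis using 3 by (simp add: calL1_def)
  qed
qed

lemma calL2_holo: "calL2 holomorphic_on W"
  using calL2_deriv open_W holomorphic_on_open field_differentiable_def by blast

lemma deriv_calL2: "z \<in> W \<Longrightarrow> deriv calL2 z = - 2 * pi * \<i> * calL1 z"
  using calL2_deriv DERIV_imp_deriv by blast

lemma regionZ_ball:
  assumes z: "z \<in> regionZ \<nu> M" and w: "dist w z < \<nu>"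
  shows "w \<in> W"
proof (cases "Im w = 0")
  case False then show ?thesis by (auto simp: W_def)
next
  case True
  have d: "cmod (w - z) < \<nu>" using w by (simp add: dist_norm)
  have "\<bar>Im z\<bar> < \<nu>"
    using abs_Im_le_cmod[of "w - z"] d True by simp
  moreover have "\<bar>Re w - Re z\<bar> < \<nu>"
    using abs_Re_le_cmod[of "w - z"] d by simp
  moreover have "-1 + \<nu> \<le> Re z" "Re z \<le> 2 - \<nu>" "z \<notin> box_minus \<nu>" "z \<notin> box_plus \<nu>"
    using z by (auto simp: regionZ_def)
  ultimately have "\<nu> < Re z" "Re z < 1 - \<nu>"
    by (auto simp: box_minus_def box_plus_def)
  with \<open>\<bar>Re w - Re z\<bar> < \<nu>\<close> have "w \<in> strip" by (auto simp: strip_def)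
  then show ?thesis by (simp add: W_def)
qed

lemma regionZ_bounded: "regionZ \<nu> M \<subseteq> cball 0 (2 + \<bar>\<nu>\<bar> + M)"
proof
  fix z assume "z \<in> regionZ \<nu> M"
  then have "\<bar>Re z\<bar> \<le> 2 + \<bar>\<nu>\<bar>" "\<bar>Im z\<bar> \<le> M" by (auto simp: regionZ_def) 
  then have "norm z \<le> 2 + \<bar>\<nu>\<bar> + M" using cmod_le[of z] by linarith
  then show "z \<in> cball 0 (2 + \<bar>\<nu>\<bar> + M)" by simp
qed

lemma taylor_step:
  fixes F :: "complex \<Rightarrow> complex"
  assumes hol: "F holomorphic_on W" and S: "S \<subseteq> W" "convex S"
    and B: "\<And>x. x \<in> S \<Longrightarrow> norm ((deriv ^^ 3) F x) \<le> B"
    and z: "z \<in> S" and u: "z + h \<in> S"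
  shows "norm (F (z + h) - (F z + deriv F z * h + (deriv ^^ 2) F z * h^2 / 2)) \<le> B * norm h ^ 3 / 2"
proof -
  have "cmod ((deriv ^^ 0) F (z + h) - (\<Sum>i\<le>2. (deriv ^^ i) F z * (z + h - z) ^ i / fact i))
        \<le> B * cmod (z + h - z) ^ Suc 2 / fact 2"
  proof (rule complex_Taylor[OF S(2) _ _ z u])
    fix i :: nat and x assume x: "x \<in> S" and "i \<le> 2"
    have "(deriv ^^ i) F holomorphic_on W" by (rule holomorphic_higher_deriv[OF hol open_W])
    then have "((deriv ^^ i) F has_field_derivative deriv ((deriv ^^ i) F) x) (at x within S)"
      by (rule holomorphic_derivI[where S=W]) (use x S(1) open_W in auto)
    then show "((deriv ^^ i) F has_field_derivative (deriv ^^ Suc i) F x) (at x within S)"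
      by simp
  next
    fix x assume "x \<in> S" then show "cmod ((deriv ^^ Suc 2) F x) \<le> B"
      using B by (simp add: numeral_3_eq_3)
  qed
  moreover have "(\<Sum>i\<le>2. (deriv ^^ i) F z * (z + h - z) ^ i / fact i)
      = F z + deriv F z * h + (deriv ^^ 2) F z * h^2 / 2"
    by (simp add: numeral_2_eq_2 atMost_Suc)
  ultimately show ?thesis by (simp add: numeral_2_eq_2 numeral_3_eq_3)
qed

theorem lemma2p20:
  fixes \<gamma> :: complex and \<nu> M :: real
  assumes "Re \<gamma> > 0" and "Im \<gamma> < 0"
    and "0 < \<nu>" and "\<nu> < 1/2" and "M > 0"
  shows "\<exists>c>0. \<exists>N0::nat. \<forall>N::nat \<ge> N0. \<forall>z \<in> regionZ \<nu> M.
           cmod (of_nat N / (2 * pi * \<i> * \<gamma>) * calL2 (z - \<gamma> / (2 * of_nat N))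
                 - of_nat N / (2 * pi * \<i> * \<gamma>) * calL2 (z + \<gamma> / (2 * of_nat N))
                 - calL1 z) < c / (real N)\<^sup>2"
proof -
  note nu = assms(3)
  have g0: "\<gamma> \<noteq> 0" using assms(1) by auto
  define g where "g = norm \<gamma>"
  have gpos: "g > 0" using g0 by (simp add: g_def)
  define U where "U = (\<Union>z\<in>regionZ \<nu> M. cball z (\<nu>/2))"
  define K where "K = closure U"
  have KW: "K \<subseteq> W"
  proof
    fix x assume "x \<in> K"
    then obtain y where y: "y \<in> U" "dist x y < \<nu>/4"
      using closure_approachableD[of x U "\<nu>/4"] nu by (auto simp: K_def)
    then obtain z where z: "z \<in> regionZ \<nu> M" "dist z y \<le> \<nu>/2" by (auto simp: U_def)
    have "dist x z \<le> dist x y + dist z y" by (simp add: dist_triangle2)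
    also have "\<dots> < \<nu>" using y z nu by linarith
    finally show "x \<in> W" by (rule regionZ_ball[OF z(1)])
  qed
  have "U \<subseteq> cball 0 (2 + \<bar>\<nu>\<bar> + M + \<nu>/2)"
  proof
    fix x assume "x \<in> U"
    then obtain z where z: "z \<in> regionZ \<nu> M" "dist z x \<le> \<nu>/2" by (auto simp: U_def)
    have "norm z \<le> 2 + \<bar>\<nu>\<bar> + M" using regionZ_bounded z(1) by fastforce
    moreover have "norm x \<le> norm z + dist z x"
      by (metis dist_commute dist_norm norm_triangle_sub add.commute)
    ultimately show "x \<in> cball 0 (2 + \<bar>\<nu>\<bar> + M + \<nu>/2)" using z(2) by simp
  qed
  then have "bounded U" by (rule bounded_subset[OF bounded_cball])
  then have cK: "compact K" unfolding K_def by (simp add: compact_eq_bounded_closed bounded_closure)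
  have "(deriv ^^ 3) calL2 holomorphic_on W" by (rule holomorphic_higher_deriv[OF calL2_holo open_W])
  then have "continuous_on K ((deriv ^^ 3) calL2)"
    using KW holomorphic_on_imp_continuous_on continuous_on_subset by blast
  then have "bounded ((deriv ^^ 3) calL2 ` K)"
    by (intro compact_imp_bounded compact_continuous_image cK)
  then obtain B where B: "\<And>x. x \<in> K \<Longrightarrow> norm ((deriv ^^ 3) calL2 x) \<le> B"
    by (auto simp: bounded_iff)
  define c where "c = \<bar>B\<bar> * g^2 / (16 * pi) + 1"
  have cpos: "c > 0" unfolding c_def by (simp add: add_nonneg_pos)
  define N0 where "N0 = nat \<lceil>g / \<nu>\<rceil> + 1"
  show ?thesis
  proof (intro exI[of _ c] conjI exI[of _ N0] allI impI ballI cpos)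
    fix N :: nat and z assume N: "N \<ge> N0" and z: "z \<in> regionZ \<nu> M"
    define n where "n = real N"
    have "g / \<nu> \<le> real (nat \<lceil>g / \<nu>\<rceil>)" by (rule real_nat_ceiling_ge)
    moreover have "real (nat \<lceil>g / \<nu>\<rceil>) \<le> real N" using N unfolding N0_def by (subst of_nat_le_iff) linarith
    ultimately have "real N \<ge> g / \<nu>" by linarith
    then have gn: "g \<le> \<nu> * n" using nu by (simp add: n_def field_simps)
    have npos: "n > 0" using N by (simp add: n_def N0_def)
    define h where "h = \<gamma> / (2 * of_nat N)"
    have nh: "norm h = g / (2 * n)" by (simp add: h_def g_def n_def norm_divide norm_mult)
    have nh2: "norm h \<le> \<nu>/2" unfolding nh using gn npos by (simp add: field_simps)
    define S where "S = cball z (\<nu>/2)"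
    have "S \<subseteq> U" unfolding S_def U_def using z by (rule UN_upper)
    then have SK: "S \<subseteq> K" unfolding K_def by (rule order_trans[OF _ closure_subset])
    have SW: "S \<subseteq> W" using SK KW by blast
    have zS: "z \<in> S" using nu by (simp add: S_def)
    have zh1: "z + h \<in> S" using nh2 by (simp add: S_def dist_norm)
    have zh2: "z + - h \<in> S" using nh2 by (simp add: S_def dist_norm)
    have BS: "\<And>x. x \<in> S \<Longrightarrow> norm ((deriv ^^ 3) calL2 x) \<le> B" using B SK by blast
    have cS: "convex S" by (simp add: S_def)
    have tay: "\<And>h'. z + h' \<in> S \<Longrightarrow> norm (calL2 (z + h') - (calL2 z + deriv calL2 z * h' + (deriv ^^ 2) calL2 z * h'^2 / 2)) \<le> B * norm h' ^ 3 / 2"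
      using taylor_step[OF calL2_holo SW cS BS zS] by blast
    define F1 where "F1 = deriv calL2 z"
    define F2 where "F2 = (deriv ^^ 2) calL2 z"
    define R1 where "R1 = calL2 (z - h) - (calL2 z + F1 * (-h) + F2 * (-h)^2 / 2)"
    define R2 where "R2 = calL2 (z + h) - (calL2 z + F1 * h + F2 * h^2 / 2)"
    have r1: "norm R1 \<le> B * norm h ^ 3 / 2" using tay[OF zh2] by (simp add: R1_def F1_def F2_def)
    have r2: "norm R2 \<le> B * norm h ^ 3 / 2" using tay[OF zh1] by (simp add: R2_def F1_def F2_def)
    have zW: "z \<in> W" using regionZ_ball[OF z, of z] nu by simp
    have F1e: "F1 = - 2 * pi * \<i> * calL1 z" unfolding F1_def by (rule deriv_calL2[OF zW])
    define k where "k = of_nat N / (2 * pi * \<i> * \<gamma>)"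
    have Nc: "(of_nat N :: complex) \<noteq> 0" using npos by (simp add: n_def)
    have d1: "R1 - R2 = calL2 (z - h) - calL2 (z + h) + 2 * F1 * h"
      unfolding R1_def R2_def by (simp add: algebra_simps)
    have d2: "k * (2 * F1 * h) = - calL1 z"
      unfolding k_def F1e h_def using g0 Nc by (simp add: field_simps)
    have "k * (R1 - R2) = k * calL2 (z - h) - k * calL2 (z + h) - calL1 z"
      by (simp only: d1 distrib_left right_diff_distrib d2) simp
    then have key: "of_nat N / (2 * pi * \<i> * \<gamma>) * calL2 (z - \<gamma> / (2 * of_nat N))
                 - of_nat N / (2 * pi * \<i> * \<gamma>) * calL2 (z + \<gamma> / (2 * of_nat N))
                 - calL1 z = of_nat N / (2 * pi * \<i> * \<gamma>) * (R1 - R2)"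
      unfolding k_def h_def by simp
    have nf: "norm (of_nat N / (2 * pi * \<i> * \<gamma>)) = n / (2 * pi * g)"
      by (simp add: norm_divide norm_mult g_def n_def)
    have "norm (R1 - R2) \<le> B * norm h ^ 3"
      using norm_triangle_ineq4[of R1 R2] r1 r2 by simp
    then have "norm (of_nat N / (2 * pi * \<i> * \<gamma>) * (R1 - R2)) \<le> n / (2 * pi * g) * (B * (g / (2 * n)) ^ 3)"
      unfolding norm_mult nf nh using npos gpos by (intro mult_left_mono) auto
    also have "\<dots> = B * g^2 / (16 * pi * n^2)"
      using npos gpos by (simp add: field_simps power2_eq_square power3_eq_cube)
    also have "\<dots> \<le> \<bar>B\<bar> * g^2 / (16 * pi * n^2)"
      using npos by (intro divide_right_mono mult_right_mono) auto
    also have "\<dots> < c / n^2"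
      using npos by (simp add: c_def field_simps)
    finally show "cmod (of_nat N / (2 * pi * \<i> * \<gamma>) * calL2 (z - \<gamma> / (2 * of_nat N))
                 - of_nat N / (2 * pi * \<i> * \<gamma>) * calL2 (z + \<gamma> / (2 * of_nat N))
                 - calL1 z) < c / (real N)\<^sup>2"
      unfolding key n_def .
  qed
qed

end
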